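(* Let $n,p,k\ge 1$, let $X\in\mathbb{R}^{n\times p}$, $\omega\in\mathbb{R}^n$, and let $\theta_1^*,\dots,\theta_k^*\in\mathbb{R}^p$, with observation $y = X\sum_{i=1}^k\theta_i^* + \omega$. Let $R_1,\dots,R_k$ be norms on $\mathbb{R}^p$ and let $(\hat\theta_1,\dots,\hat\theta_k)$ be a solution of $$\min_{\theta_1,\dots,\theta_k}\Big\|y - X\sum_{i=1}^k\theta_i\Big\|_2^2\quad\text{s.t.}\quad R_i(\theta_i)\le R_i(\theta_i^* ),\ i=1,\dots,k.$$ Set $\Delta_i=\hat\theta_i-\theta_i^*$. Assume the restricted eigenvalue condition holds with constant $\kappa>0$: for all $\Delta_i'\in\mathcal{C}_i$, $i=1,\dots,k$, $$\frac{1}{\sqrt n}\Big\|X\sum_{i=1}^k\Delta_i'\Big\|_2\ \ge\ \kappa\sum_{i=1}^k\|\Delta_i'\|_2 .$$ Let $\gamma>0$. If $\kappa^2>\gamma$, then $\sum_{i=1}^k\|\Delta_i\|_2\le 2 s_n(\gamma)$.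
   Context: For each $i$, the error cone is $\mathcal{C}_i=\operatorname{cone}\{\Delta\in\mathbb{R}^p: R_i(\theta_i^*+\Delta)\le R_i(\theta_i^* )\}$, where $\operatorname{cone}(E)$ denotes the smallest closed cone containing $E$. Let $\mathcal{H}=\{\sum_{i=1}^k\Delta_i' : \Delta_i'\in\mathcal{C}_i,\ \sum_{i=1}^k\|\Delta_i'\|_2=1\}$ and, for $s>0$, $s\mathcal{H}=\{su:u\in\mathcal{H}\}$. The noise–design interaction is $$s_n(\gamma)=\inf\Big\{s>0:\ \sup_{u\in s\mathcal{H}}\frac{1}{\sqrt n}\,\omega^T X u\le \gamma s^2\sqrt n\Big\}.$$ *)

theory Defs
  imports "HOL-Analysis.Analysis"
begin

definition is_norm :: "('a::real_vector \<Rightarrow> real) \<Rightarrow> bool" where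
  "is_norm R \<longleftrightarrow> (\<forall>x. 0 \<le> R x) \<and> (\<forall>x. R x = 0 \<longleftrightarrow> x = 0)
     \<and> (\<forall>c x. R (c *\<^sub>R x) = \<bar>c\<bar> * R x) \<and> (\<forall>x y. R (x + y) \<le> R x + R y)"

definition closed_cone_hull :: "'a::{real_vector,topological_space} set \<Rightarrow> 'a set" where
  "closed_cone_hull E = \<Inter>{C. cone C \<and> closed C \<and> E \<subseteq> C}"

definition error_cone :: "('a::real_normed_vector \<Rightarrow> real) \<Rightarrow> 'a \<Rightarrow> 'a set" where
  "error_cone R theta = closed_cone_hull {d. R (theta + d) \<le> R theta}"

definition H_set :: "nat \<Rightarrow> (nat \<Rightarrow> 'a::real_normed_vector \<Rightarrow> real) \<Rightarrow> (nat \<Rightarrow> 'a) \<Rightarrow> 'a set" where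
  "H_set k R thetas = {(\<Sum>i=1..k. D i) | D. (\<forall>i\<in>{1..k}. D i \<in> error_cone (R i) (thetas i))
        \<and> (\<Sum>i=1..k. norm (D i)) = 1}"

text \<open>Noise-design interaction s_n(gamma), with n = CARD('n).
  The condition sup_{u in sH} f(u) <= c is written as: for all u in sH, f(u) <= c.\<close>
definition noise_design :: "real ^'p ^'n \<Rightarrow> real ^'n \<Rightarrow> nat \<Rightarrow> (nat \<Rightarrow> real^'p \<Rightarrow> real)
     \<Rightarrow> (nat \<Rightarrow> real^'p) \<Rightarrow> real \<Rightarrow> real" where
  "noise_design X w k R thetas gamma =
     Inf {s. s > 0 \<and> (\<forall>u \<in> (\<lambda>v. s *\<^sub>R v) ` H_set k R thetas.
        (1 / sqrt (real CARD('n))) * (w \<bullet> (X *v u)) \<le> gamma * s^2 * sqrt (real CARD('n)))}"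

end

theory Submission
  imports Defs
begin

lemma in_cone_hull: "x \<in> E \<Longrightarrow> x \<in> closed_cone_hull E"
  unfolding closed_cone_hull_def by blast

lemma cone_hull_cone: "x \<in> closed_cone_hull E \<Longrightarrow> (c::real) \<ge> 0 \<Longrightarrow> c *\<^sub>R x \<in> closed_cone_hull E"
  unfolding closed_cone_hull_def cone_def by blast

theorem theorem1:
  fixes X :: "real ^'p ^'n" and w y :: "real ^'n" and k :: nat
    and thetas thetahat :: "nat \<Rightarrow> real ^'p" and R :: "nat \<Rightarrow> real ^'p \<Rightarrow> real"
    and kappa gamma :: real
  assumes k: "k \<ge> 1"
    and y: "y = X *v (\<Sum>i=1..k. thetas i) + w"
    and norms: "\<forall>i\<in>{1..k}. is_norm (R i)"
    and feas: "\<forall>i\<in>{1..k}. R i (thetahat i) \<le> R i (thetas i)"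
    and opt: "\<forall>theta. (\<forall>i\<in>{1..k}. R i (theta i) \<le> R i (thetas i)) \<longrightarrow>
               (norm (y - X *v (\<Sum>i=1..k. thetahat i)))^2 \<le> (norm (y - X *v (\<Sum>i=1..k. theta i)))^2"
    and kappa: "kappa > 0"
    and RE: "\<forall>D. (\<forall>i\<in>{1..k}. D i \<in> error_cone (R i) (thetas i)) \<longrightarrow>
               (1 / sqrt (real CARD('n))) * norm (X *v (\<Sum>i=1..k. D i)) \<ge> kappa * (\<Sum>i=1..k. norm (D i))"
    and gamma: "gamma > 0"
    and kg: "kappa^2 > gamma"
  shows "(\<Sum>i=1..k. norm (thetahat i - thetas i)) \<le> 2 * noise_design X w k R thetas gamma"
proof -
  define N where "N = real CARD('n)"
  have N: "N > 0" unfolding N_def by simp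
  have sN: "sqrt N > 0" "sqrt N * sqrt N = N" using N by auto
  define S where "S = {s. s > 0 \<and> (\<forall>u \<in> (\<lambda>v. s *\<^sub>R v) ` H_set k R thetas.
        (1 / sqrt N) * (w \<bullet> (X *v u)) \<le> gamma * s^2 * sqrt N)}"
  have nd: "noise_design X w k R thetas gamma = Inf S"
    unfolding noise_design_def S_def N_def by simp
  have memS: "s \<in> S \<longleftrightarrow> s > 0 \<and> (\<forall>u \<in> H_set k R thetas. w \<bullet> (X *v u) \<le> gamma * s * N)" for s
  proof -
    have "(1 / sqrt N) * (w \<bullet> (X *v (s *\<^sub>R u))) \<le> gamma * s^2 * sqrt N \<longleftrightarrow> w \<bullet> (X *v u) \<le> gamma * s * N"
      if "s > 0" for u
    proof -
      have "(1 / sqrt N) * (w \<bullet> (X *v (s *\<^sub>R u))) \<le> gamma * s^2 * sqrt N \<longleftrightarrow>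
            s * (w \<bullet> (X *v u)) \<le> s * (gamma * s * N)"
        using sN by (simp add: matrix_vector_mult_scaleR field_simps power2_eq_square)
      also have "\<dots> \<longleftrightarrow> w \<bullet> (X *v u) \<le> gamma * s * N" using that by (simp add: mult.assoc)
      finally show ?thesis .
    qed
    then show ?thesis unfolding S_def by auto
  qed
  obtain B where B: "\<And>x. norm (X *v x) \<le> norm x * B" "B > 0"
    using bounded_linear.pos_bounded[OF matrix_vector_mul_bounded_linear[of X]] by blast
  have Hb: "w \<bullet> (X *v u) \<le> norm w * B" if uH: "u \<in> H_set k R thetas" for u
  proof -
    obtain D where D: "u = (\<Sum>i=1..k. D i)" "(\<Sum>i=1..k. norm (D i)) = 1"
      using uH unfolding H_set_def by blast
    have "norm u \<le> 1" using D norm_sum[of D "{1..k}"] by simp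
    have "w \<bullet> (X *v u) \<le> norm w * norm (X *v u)" by (rule norm_cauchy_schwarz)
    also have "\<dots> \<le> norm w * (norm u * B)" by (rule mult_left_mono[OF B(1)]) simp
    also have "\<dots> \<le> norm w * B" using \<open>norm u \<le> 1\<close> B(2)
      by (simp add: mult_left_mono mult_right_le_one_le)
    finally show ?thesis .
  qed
  define s0 where "s0 = (norm w * B + 1) / (gamma * N)"
  have "s0 \<in> S"
  proof -
    have "s0 > 0" unfolding s0_def using gamma N B(2) by (simp add: add_nonneg_pos)
    moreover have "gamma * s0 * N = norm w * B + 1" unfolding s0_def using gamma N by simp
    ultimately show ?thesis unfolding memS using Hb by force
  qed
  hence Sne: "S \<noteq> {}" by blast
  have bdd: "bdd_below S" unfolding bdd_below_def by (rule exI[of _ 0]) (auto simp: memS)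
  have Inf0: "Inf S \<ge> 0" using Sne by (rule cInf_greatest) (simp add: memS)
  define Dl where "Dl i = thetahat i - thetas i" for i
  define t where "t = (\<Sum>i=1..k. norm (Dl i))"
  have Dcone: "Dl i \<in> error_cone (R i) (thetas i)" if "i \<in> {1..k}" for i
    unfolding error_cone_def Dl_def using feas that by (intro in_cone_hull) simp
  define Del where "Del = (\<Sum>i=1..k. Dl i)"
  have sumhat: "(\<Sum>i=1..k. thetahat i) = (\<Sum>i=1..k. thetas i) + Del"
    unfolding Del_def Dl_def by (simp add: sum_subtractf)
  have "(norm (w - X *v Del))^2 \<le> (norm w)^2"
    using opt[rule_format, of thetas] y sumhat by (simp add: matrix_vector_right_distrib)
  hence key: "(norm (X *v Del))^2 \<le> 2 * (w \<bullet> (X *v Del))"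
    by (simp add: power2_norm_eq_inner inner_diff inner_commute)
  show ?thesis
  proof (cases "t = 0")
    case True thus ?thesis using Inf0 nd t_def Dl_def by simp
  next
    case False
    hence tpos: "t > 0" unfolding t_def by (metis norm_ge_zero sum_nonneg order_le_less)
    show ?thesis
    proof (rule ccontr)
      assume "\<not> ?thesis"
      hence "Inf S < t / 2" unfolding t_def[symmetric] Dl_def[symmetric] nd by simp
      then obtain s where s: "s \<in> S" "s < t / 2" using cInf_lessD[OF Sne] by blast
      define D where "D i = (1 / t) *\<^sub>R Dl i" for i
      have "(\<Sum>i=1..k. D i) \<in> H_set k R thetas"
      proof -
        have "\<forall>i\<in>{1..k}. D i \<in> error_cone (R i) (thetas i)"
          using Dcone tpos unfolding D_def error_cone_def by (auto intro: cone_hull_cone)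
        moreover have "(\<Sum>i=1..k. norm (D i)) = 1"
          using tpos unfolding D_def t_def by (simp add: sum_divide_distrib[symmetric])
        ultimately show ?thesis unfolding H_set_def by blast
      qed
      moreover have "(\<Sum>i=1..k. D i) = (1/t) *\<^sub>R Del"
        unfolding D_def Del_def by (simp add: scaleR_sum_right)
      ultimately have "w \<bullet> (X *v ((1/t) *\<^sub>R Del)) \<le> gamma * s * N" using s(1) memS by metis
      hence "(1/t) * (w \<bullet> (X *v Del)) \<le> gamma * s * N" by (simp add: matrix_vector_mult_scaleR)
      hence "w \<bullet> (X *v Del) \<le> t * (gamma * s * N)" using tpos by (simp add: field_simps)
      also have "\<dots> < t * (gamma * (t/2) * N)" using tpos gamma N s(2) by simp
      finally have A: "2 * (w \<bullet> (X *v Del)) < gamma * t^2 * N" by (simp add: power2_eq_square mult_ac)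
      have "(1 / sqrt N) * norm (X *v Del) \<ge> kappa * t"
        using RE[rule_format, of Dl] Dcone unfolding N_def Del_def t_def by blast
      hence "norm (X *v Del) \<ge> kappa * t * sqrt N" using sN by (simp add: field_simps)
      hence "(norm (X *v Del))^2 \<ge> (kappa * t * sqrt N)^2"
        using kappa tpos sN by (intro power_mono) auto
      hence "(norm (X *v Del))^2 \<ge> kappa^2 * t^2 * N" using N by (simp add: power_mult_distrib)
      with key A have "kappa^2 * t^2 * N < gamma * t^2 * N" by linarith
      hence "kappa^2 < gamma" using tpos N by simp
      with kg show False by simp
    qed
  qed
qed

end
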